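(* Let $\Gamma$ be a graph of order $n$, minimum degree $\delta>0$ and maximum degree $\Delta\ge 2$. For every integer $j\in\{2-\Delta,\dots,0\}$ and every integer $k\le-\frac{j\delta}{\Delta}$, we have $\gamma_k^o(\Gamma)+\gamma_j^o(\Gamma)\le n$.
   Context: Graphs are finite and simple. For $S\subseteq V$ and $v\in V$, $\delta_S(v)$ is the number of neighbours of $v$ in $S$, $\overline{S}=V\setminus S$, and $\partial(S)$ the set of vertices of $\overline{S}$ with a neighbour in $S$. A nonempty $S$ is an offensive $k$-alliance if $\delta_S(v)\ge\delta_{\overline{S}}(v)+k$ for all $v\in\partial(S)$, and a global offensive $k$-alliance if moreover it is dominating. $\gamma_k^o(\Gamma)$ denotes the minimum cardinality of a global offensive $k$-alliance in $\Gamma$. *)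

theory Defs
  imports Complex_Main
begin

definition simple_graph :: "'a set \<Rightarrow> ('a \<Rightarrow> 'a \<Rightarrow> bool) \<Rightarrow> bool" where
  "simple_graph V E \<longleftrightarrow> finite V \<and> (\<forall>u v. E u v \<longrightarrow> E v u)
     \<and> (\<forall>v. \<not> E v v) \<and> (\<forall>u v. E u v \<longrightarrow> u \<in> V \<and> v \<in> V)"

definition deg :: "'a set \<Rightarrow> ('a \<Rightarrow> 'a \<Rightarrow> bool) \<Rightarrow> 'a \<Rightarrow> nat" where
  "deg V E v = card {u \<in> V. E v u}"

definition min_deg :: "'a set \<Rightarrow> ('a \<Rightarrow> 'a \<Rightarrow> bool) \<Rightarrow> nat" where
  "min_deg V E = Min (deg V E ` V)"

definition max_deg :: "'a set \<Rightarrow> ('a \<Rightarrow> 'a \<Rightarrow> bool) \<Rightarrow> nat" where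
  "max_deg V E = Max (deg V E ` V)"

definition delta_in :: "('a \<Rightarrow> 'a \<Rightarrow> bool) \<Rightarrow> 'a set \<Rightarrow> 'a \<Rightarrow> nat" where
  "delta_in E S v = card {u \<in> S. E v u}"

definition boundary :: "'a set \<Rightarrow> ('a \<Rightarrow> 'a \<Rightarrow> bool) \<Rightarrow> 'a set \<Rightarrow> 'a set" where
  "boundary V E S = {v \<in> V - S. \<exists>u \<in> S. E v u}"

definition offensive_alliance :: "'a set \<Rightarrow> ('a \<Rightarrow> 'a \<Rightarrow> bool) \<Rightarrow> int \<Rightarrow> 'a set \<Rightarrow> bool" where
  "offensive_alliance V E k S \<longleftrightarrow> S \<noteq> {} \<and> S \<subseteq> V \<and>
     (\<forall>v \<in> boundary V E S. int (delta_in E S v) \<ge> int (delta_in E (V - S) v) + k)"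

definition dominating :: "'a set \<Rightarrow> ('a \<Rightarrow> 'a \<Rightarrow> bool) \<Rightarrow> 'a set \<Rightarrow> bool" where
  "dominating V E S \<longleftrightarrow> S \<subseteq> V \<and> (\<forall>v \<in> V - S. \<exists>u \<in> S. E v u)"

definition global_offensive_alliance :: "'a set \<Rightarrow> ('a \<Rightarrow> 'a \<Rightarrow> bool) \<Rightarrow> int \<Rightarrow> 'a set \<Rightarrow> bool" where
  "global_offensive_alliance V E k S \<longleftrightarrow> offensive_alliance V E k S \<and> dominating V E S"

text \<open>\<gamma>_k^o: minimum cardinality of a global offensive k-alliance
(V itself always is one when V is nonempty, since its boundary is empty).\<close>
definition gamma_o :: "'a set \<Rightarrow> ('a \<Rightarrow> 'a \<Rightarrow> bool) \<Rightarrow> int \<Rightarrow> nat" where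
  "gamma_o V E k = Min (card ` {S. global_offensive_alliance V E k S})"

end

theory Submission
  imports Defs
begin

definition ind :: "('a \<Rightarrow> 'a \<Rightarrow> bool) \<Rightarrow> 'a \<Rightarrow> 'a \<Rightarrow> real" where
  "ind E u w = (if E u w then 1 else 0)"
definition cutw :: "'a set \<Rightarrow> ('a \<Rightarrow> 'a \<Rightarrow> bool) \<Rightarrow> 'a set \<Rightarrow> real" where
  "cutw V E S = (\<Sum>u\<in>S. \<Sum>w\<in>V - S. ind E u w)"

lemma delta_sum: "finite A \<Longrightarrow> real (delta_in E A v) = (\<Sum>w\<in>A. ind E v w)"
proof -
  assume f: "finite A"
  have "real (delta_in E A v) = (\<Sum>u\<in>{u \<in> A. E v u}. (1::real))"
    unfolding delta_in_def by (rule real_of_card)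
  also have "\<dots> = (\<Sum>w\<in>A. if E v w then 1 else 0)" by (rule sum.inter_filter[OF f])
  finally show ?thesis unfolding ind_def .
qed

lemma cut_insert:
  assumes sym: "\<And>u w. E u w \<Longrightarrow> E w u" and irr: "\<And>u. \<not> E u u"
    and fin: "finite V" and sub: "S \<subseteq> V" and v: "v \<in> V" "v \<notin> S"
  shows "cutw V E (insert v S) = cutw V E S - real (delta_in E S v) + real (delta_in E (V - S) v)"
proof -
  have fS: "finite S" using fin sub finite_subset by blast
  have eq: "V - insert v S = (V - S) - {v}" by blast
  have vin: "v \<in> V - S" using v by blast
  have "cutw V E (insert v S) = (\<Sum>w\<in>(V-S)-{v}. ind E v w) + (\<Sum>u\<in>S. \<Sum>w\<in>(V-S)-{v}. ind E u w)"
    unfolding cutw_def eq using fS v by simp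
  also have "(\<Sum>w\<in>(V-S)-{v}. ind E v w) = (\<Sum>w\<in>V-S. ind E v w)"
    using fin vin irr by (simp add: sum_diff1 ind_def)
  also have "(\<Sum>u\<in>S. \<Sum>w\<in>(V-S)-{v}. ind E u w) = (\<Sum>u\<in>S. (\<Sum>w\<in>V-S. ind E u w) - ind E v u)"
    apply (rule sum.cong, simp)
    using fin vin sym by (auto simp add: sum_diff1 ind_def)
  also have "\<dots> = cutw V E S - (\<Sum>u\<in>S. ind E v u)"
    unfolding cutw_def by (simp add: sum_subtractf)
  finally have "cutw V E (insert v S) = (\<Sum>w\<in>V-S. ind E v w) + (cutw V E S - (\<Sum>u\<in>S. ind E v u))" .
  moreover have "real (delta_in E S v) = (\<Sum>u\<in>S. ind E v u)" using delta_sum[OF fS] .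
  moreover have "real (delta_in E (V-S) v) = (\<Sum>w\<in>V-S. ind E v w)" using delta_sum[OF finite_Diff[OF fin]] .
  ultimately show ?thesis by linarith
qed

lemma gamma_le:
  assumes "finite V" "global_offensive_alliance V E k S"
  shows "gamma_o V E k \<le> card S"
proof -
  have "{S. global_offensive_alliance V E k S} \<subseteq> Pow V"
    by (auto simp: global_offensive_alliance_def offensive_alliance_def)
  hence "finite {S. global_offensive_alliance V E k S}"
    using assms(1) finite_subset by blast
  thus ?thesis unfolding gamma_o_def using assms(2) by (intro Min_le) auto
qed

theorem mainTheorem6:
  fixes V :: "'a set" and E :: "'a \<Rightarrow> 'a \<Rightarrow> bool" and j k :: int
  assumes "simple_graph V E"
    and "V \<noteq> {}"
    and "min_deg V E > 0"
    and "max_deg V E \<ge> 2"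
    and "2 - int (max_deg V E) \<le> j" and "j \<le> 0"
    and "real_of_int k \<le> - (real_of_int j * real (min_deg V E)) / real (max_deg V E)"
  shows "gamma_o V E k + gamma_o V E j \<le> card V"
proof -
  have fin: "finite V" and sym: "\<And>u w. E u w \<Longrightarrow> E w u" and irr: "\<And>u. \<not> E u u"
    and inV: "\<And>u w. E u w \<Longrightarrow> u \<in> V \<and> w \<in> V"
    using assms(1) unfolding simple_graph_def by blast+
  define D where "D = max_deg V E"
  define m where "m = min_deg V E"
  have Dpos: "real D \<ge> 2" using assms(4) D_def by simp
  have degb: "m \<le> deg V E v \<and> deg V E v \<le> D" if "v \<in> V" for v
    unfolding m_def D_def min_deg_def max_deg_def using fin that by auto
  define c where "c u = real_of_int j * real (deg V E u) / real D" for u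
  define P where "P S = cutw V E S + (\<Sum>u\<in>S. c u)" for S
  have "finite (P ` Pow V)" "P ` Pow V \<noteq> {}" using fin by auto
  then have "Max (P ` Pow V) \<in> P ` Pow V" by (rule Max_in)
  then obtain S where S: "S \<in> Pow V" and SM: "P S = Max (P ` Pow V)" by auto
  have Smax: "P T \<le> P S" if "T \<in> Pow V" for T
    unfolding SM using \<open>finite (P ` Pow V)\<close> that by simp
  have SV: "S \<subseteq> V" using S by simp
  have fS: "finite S" using fin SV finite_subset by blast
  have degsplit: "real (deg V E v) = real (delta_in E S v) + real (delta_in E (V - S) v)" for v
  proof -
    have "real (deg V E v) = (\<Sum>w\<in>V. ind E v w)"
      using delta_sum[OF fin, of E v] unfolding deg_def delta_in_def by simp
    also have "\<dots> = (\<Sum>w\<in>V - S. ind E v w) + (\<Sum>w\<in>S. ind E v w)"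
      using fin SV by (simp add: sum.subset_diff)
    finally have "real (deg V E v) = (\<Sum>w\<in>V - S. ind E v w) + (\<Sum>w\<in>S. ind E v w)" .
    moreover have "real (delta_in E S v) = (\<Sum>u\<in>S. ind E v u)" using delta_sum[OF fS] .
    moreover have "real (delta_in E (V-S) v) = (\<Sum>w\<in>V-S. ind E v w)" using delta_sum[OF finite_Diff[OF fin]] .
    ultimately show ?thesis by linarith
  qed
  have Pins: "P (insert v T) = P T - real (delta_in E T v) + real (delta_in E (V - T) v) + c v"
    if "T \<subseteq> V" "v \<in> V" "v \<notin> T" for T v
  proof -
    have "finite T" using fin that finite_subset by blast
    thus ?thesis unfolding P_def using cut_insert[where E=E and V=V, OF sym irr fin that] that by simp
  qed
  have outc: "real (delta_in E (V - S) v) + c v \<le> real (delta_in E S v)" if "v \<in> V - S" for v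
    using Pins[OF SV, of v] Smax[of "insert v S"] that SV by auto
  have inc: "real (delta_in E S v) \<le> real (delta_in E (V - S) v) + c v" if "v \<in> S" for v
  proof -
    have T: "S - {v} \<subseteq> V" "v \<in> V" "v \<notin> S - {v}" using that SV by auto
    have ins: "insert v (S - {v}) = S" using that by auto
    have d1: "delta_in E (S - {v}) v = delta_in E S v"
    proof -
      have "{u \<in> S - {v}. E v u} = {u \<in> S. E v u}" using irr by auto
      thus ?thesis unfolding delta_in_def by simp
    qed
    have d2: "delta_in E (V - (S - {v})) v = delta_in E (V - S) v"
    proof -
      have "{u \<in> V - (S - {v}). E v u} = {u \<in> V - S. E v u}" using irr that by auto
      thus ?thesis unfolding delta_in_def by simp
    qed
    have "P (insert v (S - {v})) = P (S - {v}) - real (delta_in E (S - {v}) v) + real (delta_in E (V - (S - {v})) v) + c v"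
      using Pins[OF T] .
    hence "P S = P (S - {v}) - real (delta_in E S v) + real (delta_in E (V - S) v) + c v"
      unfolding ins d1 d2 .
    thus ?thesis using Smax[of "S - {v}"] SV by auto
  qed
  have jr: "real_of_int j \<le> 0" using assms(6) by simp
  have jD: "real D + real_of_int j \<ge> 2" using assms(5) D_def by simp
  have kb: "real_of_int k \<le> - (real_of_int j * real m) / real D" using assms(7) m_def D_def by simp
  have mpos: "real m \<ge> 1" using assms(3) m_def by simp
  have Sj: "real (delta_in E S v) \<ge> real (delta_in E (V - S) v) + real_of_int j \<and> delta_in E S v \<ge> 1"
    if v: "v \<in> V - S" for v
  proof -
    have d: "real m \<le> real (deg V E v)" "real (deg V E v) \<le> real D" using degb v by auto
    have "real_of_int j * real (deg V E v) \<ge> real_of_int j * real D"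
      using mult_left_mono_neg[OF d(2) jr] .
    hence cj: "c v \<ge> real_of_int j" unfolding c_def using Dpos by (simp add: pos_le_divide_eq)
    have o: "real (delta_in E (V - S) v) + c v \<le> real (delta_in E S v)" using outc v .
    have "delta_in E S v \<noteq> 0"
    proof
      assume z: "delta_in E S v = 0"
      have "real (deg V E v) * (real D + real_of_int j) \<ge> 1 * 2"
        using d mpos jD by (intro mult_mono) auto
      moreover have "real (deg V E v) + c v \<le> 0" using o z degsplit[of v] by simp
      hence "real (deg V E v) * real D + real_of_int j * real (deg V E v) \<le> 0"
        unfolding c_def using Dpos by (simp add: field_simps)
      ultimately show False by (simp add: algebra_simps)
    qed
    thus ?thesis using o cj by auto
  qed
  have Sk: "real (delta_in E (V - S) v) \<ge> real (delta_in E S v) + real_of_int k \<and> delta_in E (V - S) v \<ge> 1"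
    if v: "v \<in> S" for v
  proof -
    have vV: "v \<in> V" using v SV by auto
    have d: "real m \<le> real (deg V E v)" "real (deg V E v) \<le> real D" using degb vV by auto
    have "real_of_int j * real (deg V E v) \<le> real_of_int j * real m"
      using mult_left_mono_neg[OF d(1) jr] .
    hence "- c v \<ge> - (real_of_int j * real m) / real D"
      unfolding c_def using Dpos by (simp add: divide_right_mono)
    hence ck: "- c v \<ge> real_of_int k" using kb by linarith
    have cn: "c v \<le> 0" unfolding c_def using jr Dpos by (simp add: divide_nonpos_pos mult_nonpos_nonneg)
    have o: "real (delta_in E S v) \<le> real (delta_in E (V - S) v) + c v" using inc v .
    have "delta_in E (V - S) v \<noteq> 0"
    proof
      assume z: "delta_in E (V - S) v = 0"
      hence "real (deg V E v) \<le> 0" using o cn degsplit[of v] by simp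
      thus False using d mpos by simp
    qed
    thus ?thesis using o ck by auto
  qed
  have VS: "V - (V - S) = S" using SV by auto
  have Sne: "S \<noteq> {}"
  proof
    assume "S = {}"
    then obtain v where "v \<in> V - S" using assms(2) by auto
    thus False using Sj[of v] \<open>S = {}\<close> unfolding delta_in_def by simp
  qed
  have Cne: "V - S \<noteq> {}"
  proof
    assume e: "V - S = {}"
    then obtain v where "v \<in> S" using assms(2) SV by auto
    thus False using Sk[of v] e unfolding delta_in_def by simp
  qed
  have pos_card: "\<exists>u\<in>A. E v u" if "delta_in E A v \<ge> 1" for A v
  proof -
    have "{u \<in> A. E v u} \<noteq> {}" using that unfolding delta_in_def by (metis card.empty not_one_le_zero)
    thus ?thesis by auto
  qed
  have gj: "global_offensive_alliance V E j S"
    unfolding global_offensive_alliance_def offensive_alliance_def dominating_def boundary_def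
    using Sne SV Sj pos_card by force
  have gk: "global_offensive_alliance V E k (V - S)"
    unfolding global_offensive_alliance_def offensive_alliance_def dominating_def boundary_def VS
    using Cne Sk pos_card by force
  have "card (V - S) + card S = card V" using fin SV
    by (metis card_Diff_subset finite_subset le_add_diff_inverse2 card_mono)
  thus ?thesis using gamma_le[OF fin gj] gamma_le[OF fin gk] by linarith
qed

end
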